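(* Let $(X,m)$ be a $\sigma$-finite measure space, let $1\le p<\infty$, let $\gamma>0$, and let $\{T_t:t>0\}$ be a one-parameter family of (not necessarily linear) operators on $L^p(X,m)$. Let $f\in L^p(X,m)$ and assume that $(x,t)\mapsto T_tf(x)$ is measurable on $X\times(0,\infty)$. (i) If $T^*f:=\sup_{t>0}|T_tf|\in L^p(X,m)$, then $$\sup_{\lambda>0}\lambda^p\,(m\times w_\gamma)\Big(\Big\{(x,t)\in X\times(0,\infty):\frac{|T_tf(x)|}{t^{\gamma/p}}>\lambda\Big\}\Big)\le\frac1\gamma\,\|T^*f\|_{L^p(X,m)}^p .$$ In particular, if $p>1$ and there is $C_p>0$ with $\|T^*g\|_{L^p(X,m)}\le C_p\|g\|_{L^p(X,m)}$ for all $g\in L^p(X,m)$, then the left-hand side above is at most $\frac{C_p^p}{\gamma}\|f\|_{L^p(X,m)}^p$. (ii) If the limit $g(x):=\lim_{t\to0+}T_tf(x)$ exists and is finite for $m$-a.e. $x\in X$, then $$\frac1\gamma\,\|g\|_{L^p(X,m)}^p\le\liminf_{\lambda\to\infty}\lambda^p\,(m\times w_\gamma)\Big(\Big\{(x,t)\in X\times(0,\infty):\frac{|T_tf(x)|}{t^{\gamma/p}}>\lambda\Big\}\Big).$$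
   Context: For $\gamma>0$, $w_\gamma$ denotes the measure on $(0,\infty)$ given by $w_\gamma(A)=\int_A t^{\gamma-1}\,dt$ for Lebesgue measurable $A\subset(0,\infty)$; $m\times w_\gamma$ is the product measure on $X\times(0,\infty)$. *)

theory Defs
  imports "HOL-Analysis.Analysis"
begin

definition wgamma :: "real \<Rightarrow> real measure" where
  "wgamma \<gamma> = density (restrict_space lborel {0<..}) (\<lambda>t. ennreal (t powr (\<gamma> - 1)))"

definition enn_powr :: "ennreal \<Rightarrow> real \<Rightarrow> ennreal" where
  "enn_powr a p = (if a = top then top else ennreal (enn2real a powr p))"

definition Lp_mem :: "'a measure \<Rightarrow> real \<Rightarrow> ('a \<Rightarrow> real) \<Rightarrow> bool" where
  "Lp_mem M p h \<longleftrightarrow> h \<in> borel_measurable M \<and> (\<integral>\<^sup>+ x. ennreal (\<bar>h x\<bar> powr p) \<partial>M) < \<infinity>"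

definition Lp_norm_pow :: "'a measure \<Rightarrow> real \<Rightarrow> ('a \<Rightarrow> real) \<Rightarrow> ennreal" where
  "Lp_norm_pow M p h = (\<integral>\<^sup>+ x. ennreal (\<bar>h x\<bar> powr p) \<partial>M)"

definition Tstar :: "(real \<Rightarrow> ('a \<Rightarrow> real) \<Rightarrow> ('a \<Rightarrow> real)) \<Rightarrow> ('a \<Rightarrow> real) \<Rightarrow> 'a \<Rightarrow> ennreal" where
  "Tstar T f x = (SUP t\<in>{0<..}. ennreal \<bar>T t f x\<bar>)"

definition level_meas ::
  "'a measure \<Rightarrow> real \<Rightarrow> real \<Rightarrow> (real \<Rightarrow> ('a \<Rightarrow> real) \<Rightarrow> ('a \<Rightarrow> real)) \<Rightarrow> ('a \<Rightarrow> real) \<Rightarrow> real \<Rightarrow> ennreal" where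
  "level_meas M p \<gamma> T f lam =
     emeasure (M \<Otimes>\<^sub>M wgamma \<gamma>)
       {(x, t) \<in> space M \<times> {0<..}. \<bar>T t f x\<bar> / t powr (\<gamma> / p) > lam}"

end

theory Submission imports Defs begin

lemma wg_space[simp]: "space (wgamma g) = {0<..}"
  by (simp add: wgamma_def space_restrict_space)
lemma wg_sets: "sets (wgamma g) = sets (restrict_space lborel {0::real<..})"
  by (simp add: wgamma_def)

lemma wg_Ioo:
  assumes g: "g > 0" and r: "r \<ge> 0"
  shows "emeasure (wgamma g) {0<..<r} = ennreal (r powr g / g)"
proof -
  have s: "{0<..<r} \<in> sets (restrict_space lborel {0::real<..})"
    by (auto simp: sets_restrict_space_iff)
  have "emeasure (wgamma g) {0<..<r} = (\<integral>\<^sup>+ t. ennreal (t powr (g - 1)) * indicator {0<..<r} t \<partial>restrict_space lborel {0<..})"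
    unfolding wgamma_def by (rule emeasure_density[OF _ s]) (auto intro!: measurable_restrict_space1)
  also have "\<dots> = (\<integral>\<^sup>+ t. ennreal (t powr (g - 1)) * indicator {0<..<r} t * indicator {0<..} t \<partial>lborel)"
    by (rule nn_integral_restrict_space) auto
  also have "\<dots> = (\<integral>\<^sup>+ t. ennreal (t powr (g - 1)) * indicator {0<..<r} t \<partial>lborel)"
    by (intro nn_integral_cong) (auto simp: indicator_def)
  also have "\<dots> = ennreal (r powr (g - 1 + 1) / (g - 1 + 1))"
  proof (rule nn_integral_has_integral_lebesgue')
    show "((\<lambda>x. x powr (g - 1)) has_integral r powr (g - 1 + 1) / (g - 1 + 1)) {0<..<r}"
      using has_integral_powr_from_0[of "g - 1" r] g r by (simp add: has_integral_Icc_iff_Ioo)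
  qed auto
  finally show ?thesis by simp
qed

lemma wg_sigma_finite:
  assumes g: "g > 0"
  shows "sigma_finite_measure (wgamma g)"
proof
  let ?A = "range (\<lambda>n::nat. {0<..<real n})"
  show "\<exists>A. countable A \<and> A \<subseteq> sets (wgamma g) \<and> \<Union> A = space (wgamma g) \<and> (\<forall>a\<in>A. emeasure (wgamma g) a \<noteq> \<infinity>)"
  proof (intro exI[of _ ?A] conjI)
    show "?A \<subseteq> sets (wgamma g)" by (auto simp: wg_sets sets_restrict_space_iff)
    show "\<Union> ?A = space (wgamma g)"
      by (auto simp: reals_Archimedean2)
    show "\<forall>a\<in>?A. emeasure (wgamma g) a \<noteq> \<infinity>" using g by (auto simp: wg_Ioo)
  qed auto
qed


lemma E_sets:
  fixes M :: "'a measure"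
  assumes meas: "(\<lambda>(x, t). T t f x) \<in> borel_measurable (M \<Otimes>\<^sub>M wgamma g)"
  shows "{(x, t) \<in> space M \<times> {0<..}. \<bar>T t f x\<bar> / t powr (g / p) > lam} \<in> sets (M \<Otimes>\<^sub>M wgamma g)"
proof -
  have [measurable]: "(\<lambda>w. T (snd w) f (fst w)) \<in> borel_measurable (M \<Otimes>\<^sub>M wgamma g)"
    using meas by (simp add: case_prod_beta')
  have "(\<lambda>t::real. t) \<in> borel_measurable (wgamma g)"
    by (subst measurable_cong_sets[OF wg_sets refl]) (auto intro!: measurable_restrict_space1)
  then have [measurable]: "(\<lambda>w. snd w) \<in> borel_measurable (M \<Otimes>\<^sub>M wgamma g)"
    by (rule measurable_compose[OF measurable_snd])
  have "{(x, t) \<in> space M \<times> {0<..}. \<bar>T t f x\<bar> / t powr (g / p) > lam}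
     = {w \<in> space (M \<Otimes>\<^sub>M wgamma g). lam < \<bar>T (snd w) f (fst w)\<bar> / snd w powr (g / p)}"
    by (auto simp: space_pair_measure)
  also have "\<dots> \<in> sets (M \<Otimes>\<^sub>M wgamma g)" by measurable
  finally show ?thesis .
qed

lemma enn_powr_meas[measurable]:
  assumes [measurable]: "h \<in> borel_measurable M"
  shows "(\<lambda>x. enn_powr (h x) p) \<in> borel_measurable M"
  unfolding enn_powr_def by measurable

lemma pointwise1:
  assumes g: "g > 0" and p: "p \<ge> 1" and lam: "lam > 0" and x: "x \<in> space M"
  shows "ennreal (lam powr p) * emeasure (wgamma g) (Pair x -` {(x, t) \<in> space M \<times> {0<..}. \<bar>T t f x\<bar> / t powr (g / p) > lam})
     \<le> ennreal (1 / g) * enn_powr (Tstar T f x) p"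
proof (cases "Tstar T f x = top")
  case True
  then show ?thesis using g by (simp add: enn_powr_def ennreal_mult_top)
next
  case False
  then obtain c where c: "Tstar T f x = ennreal c" "c \<ge> 0" by (cases "Tstar T f x" rule: ennreal_cases) auto
  have bnd: "\<bar>T t f x\<bar> \<le> c" if "t > 0" for t
  proof -
    have "ennreal \<bar>T t f x\<bar> \<le> Tstar T f x" unfolding Tstar_def using that by (auto intro!: SUP_upper)
    then show ?thesis using c by (simp add: ennreal_le_iff)
  qed
  let ?r = "(c / lam) powr (p / g)"
  have sub: "Pair x -` {(x, t) \<in> space M \<times> {0<..}. \<bar>T t f x\<bar> / t powr (g / p) > lam} \<subseteq> {0<..<?r}"
  proof
    fix t assume "t \<in> Pair x -` {(x, t) \<in> space M \<times> {0<..}. \<bar>T t f x\<bar> / t powr (g / p) > lam}"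
    then have t: "t > 0" and lt: "\<bar>T t f x\<bar> / t powr (g / p) > lam" by auto
    have tp: "t powr (g / p) > 0" using t by simp
    have "c / t powr (g / p) > lam"
      using lt bnd[OF t] tp by (smt (verit) divide_right_mono)
    then have "t powr (g / p) < c / lam" using tp lam by (simp add: field_simps)
    then have "(t powr (g / p)) powr (p / g) < (c / lam) powr (p / g)"
      using g p tp by (intro powr_less_mono2) auto
    then have "t < ?r" using g p t by (simp add: powr_powr)
    then show "t \<in> {0<..<?r}" using t by simp
  qed
  have "emeasure (wgamma g) (Pair x -` {(x, t) \<in> space M \<times> {0<..}. \<bar>T t f x\<bar> / t powr (g / p) > lam})
     \<le> emeasure (wgamma g) {0<..<?r}"
    by (rule emeasure_mono[OF sub]) (auto simp: wg_sets sets_restrict_space_iff)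
  also have "\<dots> = ennreal (?r powr g / g)" using g by (intro wg_Ioo) auto
  finally have "ennreal (lam powr p) * emeasure (wgamma g) (Pair x -` {(x, t) \<in> space M \<times> {0<..}. \<bar>T t f x\<bar> / t powr (g / p) > lam})
     \<le> ennreal (lam powr p) * ennreal (?r powr g / g)" by (rule mult_left_mono) auto
  also have "\<dots> = ennreal (lam powr p * (?r powr g / g))" by (subst ennreal_mult) (use g in auto)
  also have "lam powr p * (?r powr g / g) = c powr p / g"
    using g p lam c(2) by (simp add: powr_powr powr_divide)
  also have "ennreal (c powr p / g) = ennreal (1 / g) * enn_powr (Tstar T f x) p"
    using c g by (simp add: enn_powr_def ennreal_mult[symmetric])
  finally show ?thesis by simp
qed


lemma level_eq:
  assumes "g > 0" and meas: "(\<lambda>(x, t). T t f x) \<in> borel_measurable (M \<Otimes>\<^sub>M wgamma g)"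
  shows "level_meas M p g T f lam = (\<integral>\<^sup>+ x. emeasure (wgamma g) (Pair x -` {(x, t) \<in> space M \<times> {0<..}. \<bar>T t f x\<bar> / t powr (g / p) > lam}) \<partial>M)"
    and "(\<lambda>x. emeasure (wgamma g) (Pair x -` {(x, t) \<in> space M \<times> {0<..}. \<bar>T t f x\<bar> / t powr (g / p) > lam})) \<in> borel_measurable M"
proof -
  interpret wg: sigma_finite_measure "wgamma g" using wg_sigma_finite assms(1) .
  show "level_meas M p g T f lam = (\<integral>\<^sup>+ x. emeasure (wgamma g) (Pair x -` {(x, t) \<in> space M \<times> {0<..}. \<bar>T t f x\<bar> / t powr (g / p) > lam}) \<partial>M)"
    unfolding level_meas_def by (rule wg.emeasure_pair_measure_alt[OF E_sets[OF meas]])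
  show "(\<lambda>x. emeasure (wgamma g) (Pair x -` {(x, t) \<in> space M \<times> {0<..}. \<bar>T t f x\<bar> / t powr (g / p) > lam})) \<in> borel_measurable M"
    by (rule wg.measurable_emeasure_Pair[OF E_sets[OF meas]])
qed

lemma part1:
  assumes g: "g > 0" and p: "p \<ge> 1"
    and meas: "(\<lambda>(x, t). T t f x) \<in> borel_measurable (M \<Otimes>\<^sub>M wgamma g)"
    and Tm: "Tstar T f \<in> borel_measurable M"
  shows "(SUP lam\<in>{0<..}. ennreal (lam powr p) * level_meas M p g T f lam)
                \<le> ennreal (1 / g) * (\<integral>\<^sup>+ x. enn_powr (Tstar T f x) p \<partial>M)"
proof (rule SUP_least)
  fix lam :: real assume "lam \<in> {0<..}"
  then have lam: "lam > 0" by simp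
  have "ennreal (lam powr p) * level_meas M p g T f lam
     = (\<integral>\<^sup>+ x. ennreal (lam powr p) * emeasure (wgamma g) (Pair x -` {(x, t) \<in> space M \<times> {0<..}. \<bar>T t f x\<bar> / t powr (g / p) > lam}) \<partial>M)"
    unfolding level_eq(1)[where T=T and f=f and M=M, OF g meas] by (rule nn_integral_cmult[symmetric, OF level_eq(2)[where T=T and f=f and M=M, OF g meas]])
  also have "\<dots> \<le> (\<integral>\<^sup>+ x. ennreal (1 / g) * enn_powr (Tstar T f x) p \<partial>M)"
    by (rule nn_integral_mono) (rule pointwise1[OF g p lam])
  also have "\<dots> = ennreal (1 / g) * (\<integral>\<^sup>+ x. enn_powr (Tstar T f x) p \<partial>M)"
    by (rule nn_integral_cmult) (use Tm in measurable)
  finally show "ennreal (lam powr p) * level_meas M p g T f lam \<le> ennreal (1 / g) * (\<integral>\<^sup>+ x. enn_powr (Tstar T f x) p \<partial>M)" .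
qed


lemma pointwise2:
  assumes g: "g > 0" and p: "p \<ge> 1" and x: "x \<in> space M"
    and lim: "((\<lambda>t. T t f x) \<longlongrightarrow> l) (at_right 0)"
    and lams: "\<And>n. lams n \<ge> real n \<and> lams n > 0"
    and meas: "(\<lambda>(x, t). T t f x) \<in> borel_measurable (M \<Otimes>\<^sub>M wgamma g)"
  shows "ennreal (1 / g) * ennreal (\<bar>l\<bar> powr p) \<le> liminf (\<lambda>n. ennreal (lams n powr p) *
     emeasure (wgamma g) (Pair x -` {(x, t) \<in> space M \<times> {0<..}. \<bar>T t f x\<bar> / t powr (g / p) > lams n}))"
  unfolding le_Liminf_iff
proof (intro allI impI)
  fix y :: ennreal
  assume y: "y < ennreal (1 / g) * ennreal (\<bar>l\<bar> powr p)"
  have eq: "ennreal (1 / g) * ennreal (\<bar>l\<bar> powr p) = ennreal (\<bar>l\<bar> powr p / g)"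
    using g by (subst ennreal_mult[symmetric]) auto
  obtain y' where y': "y = ennreal y'" "y' \<ge> 0" using y eq
    by (cases y rule: ennreal_cases) auto
  have y'l: "y' < \<bar>l\<bar> powr p / g" using y y' eq by (simp add: ennreal_less_iff)
  then have yg: "y' * g < \<bar>l\<bar> powr p" using g by (simp add: field_simps)
  have l0: "\<bar>l\<bar> > 0" using yg y'(2) g by (cases "l = 0") (auto, smt (verit) mult_nonneg_nonneg)
  define b0 where "b0 = (y' * g) powr (1 / p)"
  have b00: "b0 \<ge> 0" unfolding b0_def by simp
  have "b0 < (\<bar>l\<bar> powr p) powr (1 / p)"
    unfolding b0_def using yg y' g p by (intro powr_less_mono2) auto
  then have b0l: "b0 < \<bar>l\<bar>" using p l0 by (simp add: powr_powr)
  define b where "b = (b0 + \<bar>l\<bar>) / 2"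
  have b: "b > 0" "b < \<bar>l\<bar>" "b0 < b" using b00 b0l l0 unfolding b_def by auto
  have "b0 powr p < b powr p" using b b00 p by (intro powr_less_mono2) auto
  moreover have "b0 powr p = y' * g" unfolding b0_def using p y' g by (simp add: powr_powr)
  ultimately have ybp: "y' < b powr p / g" using g by (simp add: field_simps)
  have "\<forall>\<^sub>F t in at_right 0. b < \<bar>T t f x\<bar>"
    using order_tendstoD(1)[OF tendsto_rabs[OF lim] b(2)] .
  then obtain d where d: "d > 0" "\<And>t. t > 0 \<Longrightarrow> t < d \<Longrightarrow> b < \<bar>T t f x\<bar>"
    unfolding eventually_at_right_field by auto
  have dp: "d powr (g / p) > 0" using d by simp
  define N where "N = nat \<lceil>b / d powr (g / p)\<rceil> + 1"
  show "\<forall>\<^sub>F n in sequentially. y < ennreal (lams n powr p) *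
     emeasure (wgamma g) (Pair x -` {(x, t) \<in> space M \<times> {0<..}. \<bar>T t f x\<bar> / t powr (g / p) > lams n})"
    unfolding eventually_sequentially
  proof (intro exI[of _ N] allI impI)
    fix n assume n: "N \<le> n"
    define lam where "lam = lams n"
    have lam0: "lam > 0" using lams unfolding lam_def by auto
    have "b / d powr (g / p) < real N" unfolding N_def by linarith
    also have "\<dots> \<le> lam" using n lams[of n] unfolding lam_def by auto
    finally have "b / d powr (g / p) < lam" .
    then have blam: "b / lam < d powr (g / p)" using dp lam0 by (simp add: field_simps)
    define r where "r = (b / lam) powr (p / g)"
    have r0: "r \<ge> 0" unfolding r_def by simp
    have "r < (d powr (g / p)) powr (p / g)"
      unfolding r_def using blam b lam0 g p by (intro powr_less_mono2) auto
    then have rd: "r < d" using d g p by (simp add: powr_powr)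
    have rg: "r powr (g / p) = b / lam" unfolding r_def using g p b lam0 by (simp add: powr_powr)
    have sub: "{0<..<r} \<subseteq> Pair x -` {(x, t) \<in> space M \<times> {0<..}. \<bar>T t f x\<bar> / t powr (g / p) > lam}"
    proof
      fix t assume t: "t \<in> {0<..<r}"
      then have t0: "t > 0" and tr: "t < r" by auto
      have tb: "b < \<bar>T t f x\<bar>" using d(2)[OF t0] tr rd by auto
      have tp: "t powr (g / p) > 0" using t0 by simp
      have "t powr (g / p) < r powr (g / p)" using t0 tr g p by (intro powr_less_mono2) auto
      then have tl: "t powr (g / p) < b / lam" using rg by simp
      have "lam = b / (b / lam)" using b lam0 by simp
      also have "\<dots> < b / t powr (g / p)" using tl tp b lam0 by (intro divide_strict_left_mono) auto
      also have "\<dots> < \<bar>T t f x\<bar> / t powr (g / p)" using tb tp by (intro divide_strict_right_mono)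
      finally show "t \<in> Pair x -` {(x, t) \<in> space M \<times> {0<..}. \<bar>T t f x\<bar> / t powr (g / p) > lam}"
        using x t0 by auto
    qed
    have "y = ennreal y'" by fact
    also have "\<dots> < ennreal (b powr p / g)" using ybp y' by (subst ennreal_less_iff) auto
    also have "b powr p / g = lam powr p * (r powr g / g)"
      unfolding r_def using g p b lam0 by (simp add: powr_powr powr_divide)
    also have "ennreal \<dots> = ennreal (lam powr p) * ennreal (r powr g / g)"
      using g by (subst ennreal_mult) auto
    also have "ennreal (r powr g / g) = emeasure (wgamma g) {0<..<r}"
      using g r0 by (simp add: wg_Ioo)
    also have "ennreal (lam powr p) * \<dots> \<le> ennreal (lam powr p) *
       emeasure (wgamma g) (Pair x -` {(x, t) \<in> space M \<times> {0<..}. \<bar>T t f x\<bar> / t powr (g / p) > lam})"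
      by (intro mult_left_mono emeasure_mono[OF sub] sets_Pair1[OF E_sets[where T=T and f=f and M=M, OF meas]]) auto
    finally show "y < ennreal (lams n powr p) *
     emeasure (wgamma g) (Pair x -` {(x, t) \<in> space M \<times> {0<..}. \<bar>T t f x\<bar> / t powr (g / p) > lams n})"
      unfolding lam_def .
  qed
qed


lemma seq_at_right: "filterlim (\<lambda>n. 1 / real (Suc n)) (at_right (0::real)) sequentially"
proof -
  have "(\<lambda>n. 1 / real (Suc n)) \<longlonglongrightarrow> 0"
    using LIMSEQ_Suc[OF lim_inverse_n'] by simp
  then show ?thesis
    unfolding filterlim_at by (auto intro!: always_eventually)
qed

lemma part2:
  assumes g: "g > 0" and p: "p \<ge> 1"
    and meas: "(\<lambda>(x, t). T t f x) \<in> borel_measurable (M \<Otimes>\<^sub>M wgamma g)"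
    and Tt: "\<And>t. t > 0 \<Longrightarrow> (\<lambda>x. T t f x) \<in> borel_measurable M"
    and AEl: "AE x in M. \<exists>l. ((\<lambda>t. T t f x) \<longlongrightarrow> l) (at_right 0)"
  shows "ennreal (1 / g) * Lp_norm_pow M p (\<lambda>x. Lim (at_right 0) (\<lambda>t. T t f x))
                \<le> Liminf at_top (\<lambda>lam. ennreal (lam powr p) * level_meas M p g T f lam)"
proof -
  define G where "G x = lim (\<lambda>n. T (1 / real (Suc n)) f x)" for x
  have [measurable]: "G \<in> borel_measurable M"
    unfolding G_def by (rule borel_measurable_lim_metric) (rule Tt, simp)
  have AE2: "AE x in M. ((\<lambda>t. T t f x) \<longlongrightarrow> G x) (at_right 0) \<and> Lim (at_right 0) (\<lambda>t. T t f x) = G x"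
    using AEl
  proof eventually_elim
    case (elim x)
    then obtain l where l: "((\<lambda>t. T t f x) \<longlongrightarrow> l) (at_right 0)" by auto
    have "(\<lambda>n. T (1 / real (Suc n)) f x) \<longlonglongrightarrow> l"
      using filterlim_compose[OF l seq_at_right] by simp
    then have "G x = l" unfolding G_def by (rule limI)
    moreover have "Lim (at_right 0) (\<lambda>t. T t f x) = l"
      by (rule tendsto_Lim[OF _ l]) simp
    ultimately show ?case using l by simp
  qed
  define F where "F lam = ennreal (lam powr p) * level_meas M p g T f lam" for lam
  define H where "H = (\<integral>\<^sup>+ x. ennreal (1 / g) * ennreal (\<bar>G x\<bar> powr p) \<partial>M)"
  have "ennreal (1 / g) * Lp_norm_pow M p (\<lambda>x. Lim (at_right 0) (\<lambda>t. T t f x))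
      = ennreal (1 / g) * (\<integral>\<^sup>+ x. ennreal (\<bar>G x\<bar> powr p) \<partial>M)"
    unfolding Lp_norm_pow_def
    by (intro arg_cong2[where f="(*)"] refl nn_integral_cong_AE) (use AE2 in auto)
  also have "\<dots> = H" unfolding H_def by (rule nn_integral_cmult[symmetric]) measurable
  finally have LH: "ennreal (1 / g) * Lp_norm_pow M p (\<lambda>x. Lim (at_right 0) (\<lambda>t. T t f x)) = H" .
  have "H \<le> Liminf at_top F"
    unfolding le_Liminf_iff
  proof (intro allI impI)
    fix y assume yH: "y < H"
    show "\<forall>\<^sub>F lam in at_top. y < F lam"
    proof (rule ccontr)
      assume "\<not> (\<forall>\<^sub>F lam in at_top. y < F lam)"
      then have "\<forall>N. \<exists>lam\<ge>N. \<not> y < F lam" unfolding eventually_at_top_linorder by auto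
      then have "\<forall>n::nat. \<exists>lam. lam \<ge> real n + 1 \<and> \<not> y < F lam" by auto
      then obtain lams where lams: "\<And>n. lams n \<ge> real n + 1" "\<And>n. \<not> y < F (lams n)"
        by metis
      have lams': "\<And>n. lams n \<ge> real n \<and> lams n > 0"
        using lams(1) by (smt (verit) of_nat_0_le_iff)
      define u where "u n x = ennreal (lams n powr p) *
          emeasure (wgamma g) (Pair x -` {(x, t) \<in> space M \<times> {0<..}. \<bar>T t f x\<bar> / t powr (g / p) > lams n})" for n x
      have um: "u n \<in> borel_measurable M" for n
        unfolding u_def by (intro borel_measurable_times_ennreal borel_measurable_const level_eq(2)[where T=T and f=f and M=M, OF g meas])
      have uF: "integral\<^sup>N M (u n) = F (lams n)" for n
        unfolding u_def F_def level_eq(1)[where T=T and f=f and M=M, OF g meas]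
        by (rule nn_integral_cmult[OF level_eq(2)[where T=T and f=f and M=M, OF g meas]])
      have "H \<le> (\<integral>\<^sup>+ x. liminf (\<lambda>n. u n x) \<partial>M)"
        unfolding H_def
      proof (rule nn_integral_mono_AE)
        show "AE x in M. ennreal (1 / g) * ennreal (\<bar>G x\<bar> powr p) \<le> liminf (\<lambda>n. u n x)"
          using AE2 AE_space
        proof eventually_elim
          case (elim x)
          then show ?case unfolding u_def
            by (intro pointwise2[OF g p _ _ lams' meas]) auto
        qed
      qed
      also have "\<dots> \<le> liminf (\<lambda>n. integral\<^sup>N M (u n))" by (rule nn_integral_liminf[OF um])
      also have "\<dots> = liminf (\<lambda>n. F (lams n))" by (simp add: uF)
      also have "\<dots> \<le> limsup (\<lambda>n. F (lams n))" by (rule Liminf_le_Limsup) simp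
      also have "\<dots> \<le> y" by (rule Limsup_bounded) (use lams(2) in \<open>auto simp: not_less\<close>)
      finally show False using yH by simp
    qed
  qed
  then show ?thesis using LH unfolding F_def by simp
qed


theorem theorem1p1:
  fixes M :: "'a measure" and p \<gamma> :: real
    and T :: "real \<Rightarrow> ('a \<Rightarrow> real) \<Rightarrow> ('a \<Rightarrow> real)" and f :: "'a \<Rightarrow> real"
  assumes "sigma_finite_measure M"
    and "1 \<le> p"
    and "\<gamma> > 0"
    and "\<And>g t. Lp_mem M p g \<Longrightarrow> t > 0 \<Longrightarrow> Lp_mem M p (T t g)"
    and "Lp_mem M p f"
    and "(\<lambda>(x, t). T t f x) \<in> borel_measurable (M \<Otimes>\<^sub>M wgamma \<gamma>)"
  shows "(Tstar T f \<in> borel_measurable M \<and> (\<integral>\<^sup>+ x. enn_powr (Tstar T f x) p \<partial>M) < \<infinity>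
          \<longrightarrow> (SUP lam\<in>{0<..}. ennreal (lam powr p) * level_meas M p \<gamma> T f lam)
                \<le> ennreal (1 / \<gamma>) * (\<integral>\<^sup>+ x. enn_powr (Tstar T f x) p \<partial>M))
      \<and> (\<forall>C. p > 1 \<and> C > 0 \<and>
            (\<forall>g. Lp_mem M p g \<longrightarrow> Tstar T g \<in> borel_measurable M \<and>
                 (\<integral>\<^sup>+ x. enn_powr (Tstar T g x) p \<partial>M) \<le> ennreal (C powr p) * Lp_norm_pow M p g)
          \<longrightarrow> (SUP lam\<in>{0<..}. ennreal (lam powr p) * level_meas M p \<gamma> T f lam)
                \<le> ennreal (C powr p / \<gamma>) * Lp_norm_pow M p f)
      \<and> ((AE x in M. \<exists>l. ((\<lambda>t. T t f x) \<longlongrightarrow> l) (at_right 0))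
          \<longrightarrow> ennreal (1 / \<gamma>) * Lp_norm_pow M p (\<lambda>x. Lim (at_right 0) (\<lambda>t. T t f x))
                \<le> Liminf at_top (\<lambda>lam. ennreal (lam powr p) * level_meas M p \<gamma> T f lam))"
proof (intro conjI allI impI)
  note g = assms(3) and p = assms(2) and meas = assms(6)
  show "(SUP lam\<in>{0<..}. ennreal (lam powr p) * level_meas M p \<gamma> T f lam)
                \<le> ennreal (1 / \<gamma>) * (\<integral>\<^sup>+ x. enn_powr (Tstar T f x) p \<partial>M)"
    if "Tstar T f \<in> borel_measurable M \<and> (\<integral>\<^sup>+ x. enn_powr (Tstar T f x) p \<partial>M) < \<infinity>"
    using part1[where T=T and f=f and M=M, OF g p meas] that by blast
  show "(SUP lam\<in>{0<..}. ennreal (lam powr p) * level_meas M p \<gamma> T f lam)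
                \<le> ennreal (C powr p / \<gamma>) * Lp_norm_pow M p f"
    if C: "p > 1 \<and> C > 0 \<and>
            (\<forall>g. Lp_mem M p g \<longrightarrow> Tstar T g \<in> borel_measurable M \<and>
                 (\<integral>\<^sup>+ x. enn_powr (Tstar T g x) p \<partial>M) \<le> ennreal (C powr p) * Lp_norm_pow M p g)" for C
  proof -
    have Tm: "Tstar T f \<in> borel_measurable M"
      and Tb: "(\<integral>\<^sup>+ x. enn_powr (Tstar T f x) p \<partial>M) \<le> ennreal (C powr p) * Lp_norm_pow M p f"
      using C assms(5) by auto
    have "(SUP lam\<in>{0<..}. ennreal (lam powr p) * level_meas M p \<gamma> T f lam)
        \<le> ennreal (1 / \<gamma>) * (\<integral>\<^sup>+ x. enn_powr (Tstar T f x) p \<partial>M)"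
      by (rule part1[where T=T and f=f and M=M, OF g p meas Tm])
    also have "\<dots> \<le> ennreal (1 / \<gamma>) * (ennreal (C powr p) * Lp_norm_pow M p f)"
      by (rule mult_left_mono[OF Tb]) simp
    also have "\<dots> = ennreal (C powr p / \<gamma>) * Lp_norm_pow M p f"
      using g by (simp add: mult.assoc[symmetric] ennreal_mult[symmetric] del: ennreal_mult)
    finally show ?thesis .
  qed
  show "ennreal (1 / \<gamma>) * Lp_norm_pow M p (\<lambda>x. Lim (at_right 0) (\<lambda>t. T t f x))
                \<le> Liminf at_top (\<lambda>lam. ennreal (lam powr p) * level_meas M p \<gamma> T f lam)"
    if "AE x in M. \<exists>l. ((\<lambda>t. T t f x) \<longlongrightarrow> l) (at_right 0)"
  proof (rule part2[where T=T and f=f and M=M, OF g p meas _ that])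
    fix t :: real assume "t > 0"
    then show "(\<lambda>x. T t f x) \<in> borel_measurable M"
      using assms(4)[OF assms(5)] unfolding Lp_mem_def by auto
  qed
qed

end
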